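(* For every positive integer $s$ there exist infinitely many (pairwise non-isomorphic) connected, essentially 2-edge connected graphs $G$ such that the graph obtained from $G$ by deleting all of its leaves is 2-connected, and $G^2$ has no $[2,2s]$-factor.
   Context: All graphs are finite, simple and undirected. The square $G^2$ of a graph $G$ is the graph on $V(G)$ in which two distinct vertices are adjacent iff their distance in $G$ is at most 2. A factor of $G$ is a spanning subgraph. A connected even factor is a connected factor in which every vertex has positive even degree. For a positive integer $s$, a $[2,2s]$-factor of $G$ is a connected even factor of $G$ in which every vertex has degree at most $2s$. A graph is essentially 2-edge connected if deleting fewer than 2 edges cannot result in (a graph with) two nontrivial components, i.e. components with at least one edge. A leaf is a vertex of degree 1. *)

theory Defs
  imports Main
begin

text \<open>A finite simple graph: a finite vertex set V and a set E of 2-element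
subsets of V.  Vertices are natural numbers (any countable type suffices for
finite graphs up to isomorphism).\<close>

type_synonym graph = "nat set \<times> nat set set"

definition verts :: "graph \<Rightarrow> nat set" where "verts G = fst G"
definition edges :: "graph \<Rightarrow> nat set set" where "edges G = snd G"

definition is_graph :: "graph \<Rightarrow> bool" where
  "is_graph G \<longleftrightarrow> finite (verts G) \<and>
     (\<forall>e\<in>edges G. \<exists>u v. e = {u, v} \<and> u \<noteq> v \<and> u \<in> verts G \<and> v \<in> verts G)"

definition adj :: "graph \<Rightarrow> nat \<Rightarrow> nat \<Rightarrow> bool" where
  "adj G u v \<longleftrightarrow> u \<noteq> v \<and> {u, v} \<in> edges G"

definition degree :: "graph \<Rightarrow> nat \<Rightarrow> nat" where
  "degree G v = card {e \<in> edges G. v \<in> e}"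

definition reach :: "graph \<Rightarrow> (nat \<times> nat) set" where
  "reach G = {(u, v). u \<in> verts G \<and> v \<in> verts G \<and> adj G u v}\<^sup>*"

definition connected :: "graph \<Rightarrow> bool" where
  "connected G \<longleftrightarrow> verts G \<noteq> {} \<and> (\<forall>u\<in>verts G. \<forall>v\<in>verts G. (u, v) \<in> reach G)"

definition induced :: "graph \<Rightarrow> nat set \<Rightarrow> graph" where
  "induced G S = (verts G \<inter> S, {e \<in> edges G. e \<subseteq> S})"

definition two_connected :: "graph \<Rightarrow> bool" where
  "two_connected G \<longleftrightarrow> card (verts G) \<ge> 3 \<and> connected G \<and>
     (\<forall>v\<in>verts G. connected (induced G (verts G - {v})))"

definition leaves :: "graph \<Rightarrow> nat set" where
  "leaves G = {v \<in> verts G. degree G v = 1}"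

definition delete_leaves :: "graph \<Rightarrow> graph" where
  "delete_leaves G = induced G (verts G - leaves G)"

definition two_nontrivial_components :: "graph \<Rightarrow> bool" where
  "two_nontrivial_components G \<longleftrightarrow>
     (\<exists>e1\<in>edges G. \<exists>e2\<in>edges G. \<exists>u\<in>e1. \<exists>v\<in>e2. (u, v) \<notin> reach G)"

definition ess_2_edge_connected :: "graph \<Rightarrow> bool" where
  "ess_2_edge_connected G \<longleftrightarrow>
     (\<forall>D \<subseteq> edges G. card D < 2 \<longrightarrow>
        \<not> two_nontrivial_components (verts G, edges G - D))"

definition square :: "graph \<Rightarrow> graph" where
  "square G = (verts G, {{u, v} | u v. u \<in> verts G \<and> v \<in> verts G \<and> u \<noteq> v \<and>
       (adj G u v \<or> (\<exists>w. adj G u w \<and> adj G w v))})"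

definition is_factor :: "graph \<Rightarrow> graph \<Rightarrow> bool" where
  "is_factor F G \<longleftrightarrow> verts F = verts G \<and> edges F \<subseteq> edges G"

definition connected_even_factor :: "graph \<Rightarrow> graph \<Rightarrow> bool" where
  "connected_even_factor F G \<longleftrightarrow> is_factor F G \<and> connected F \<and>
     (\<forall>v\<in>verts F. degree F v > 0 \<and> even (degree F v))"

definition two_2s_factor :: "nat \<Rightarrow> graph \<Rightarrow> graph \<Rightarrow> bool" where
  "two_2s_factor s F G \<longleftrightarrow> connected_even_factor F G \<and>
     (\<forall>v\<in>verts F. degree F v \<le> 2 * s)"

definition graph_iso :: "graph \<Rightarrow> graph \<Rightarrow> bool" where
  "graph_iso G H \<longleftrightarrow> (\<exists>f. bij_betw f (verts G) (verts H) \<and>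
     (\<forall>u\<in>verts G. \<forall>v\<in>verts G. {u, v} \<in> edges G \<longleftrightarrow> {f u, f v} \<in> edges H))"

end

theory Submission
  imports Defs
begin

lemma reach_sym: "(u, v) \<in> reach H \<Longrightarrow> (v, u) \<in> reach H"
proof -
  have "sym {(u, v). u \<in> verts H \<and> v \<in> verts H \<and> adj H u v}"
    unfolding sym_def adj_def by (auto simp: insert_commute)
  hence "sym (reach H)" unfolding reach_def by (rule sym_rtrancl)
  thus "(u, v) \<in> reach H \<Longrightarrow> (v, u) \<in> reach H" by (auto simp: sym_def)
qed

lemma reach_edge: "u \<in> verts H \<Longrightarrow> v \<in> verts H \<Longrightarrow> adj H u v \<Longrightarrow> (u, v) \<in> reach H"
  unfolding reach_def by (rule r_into_rtrancl) simp

lemma reach_trans: "(u, v) \<in> reach H \<Longrightarrow> (v, w) \<in> reach H \<Longrightarrow> (u, w) \<in> reach H"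
  unfolding reach_def by (rule rtrancl_trans)

lemma reach_refl: "(u, u) \<in> reach H"
  unfolding reach_def by (rule rtrancl_refl)

lemma connected_root:
  assumes "r \<in> verts H" "\<And>v. v \<in> verts H \<Longrightarrow> (r, v) \<in> reach H"
  shows "connected H"
  unfolding connected_def
proof (intro conjI ballI)
  show "verts H \<noteq> {}" using assms(1) by blast
next
  fix u v assume "u \<in> verts H" "v \<in> verts H"
  hence "(r, u) \<in> reach H" "(r, v) \<in> reach H" using assms(2) by auto
  thus "(u, v) \<in> reach H" using reach_sym reach_trans by metis
qed

lemma verts_induced[simp]: "verts (induced H S) = verts H \<inter> S"
  by (simp add: induced_def verts_def)

lemma adj_induced[simp]: "adj (induced H S) u v \<longleftrightarrow> adj H u v \<and> u \<in> S \<and> v \<in> S"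
  by (auto simp: induced_def edges_def adj_def)

definition EE :: "nat \<Rightarrow> nat set set" where
  "EE m = (\<lambda>i. {0, 2*i+2}) ` {..<m} \<union> (\<lambda>i. {1, 2*i+2}) ` {..<m} \<union> (\<lambda>i. {2*i+2, 2*i+3}) ` {..<m}"

definition GG :: "nat \<Rightarrow> graph" where "GG m = ({..<2*m+2}, EE m)"

lemma verts_GG[simp]: "verts (GG m) = {..<2*m+2}" by (simp add: GG_def verts_def)
lemma edges_GG[simp]: "edges (GG m) = EE m" by (simp add: GG_def edges_def)

lemma mem_EE: "e \<in> EE m \<longleftrightarrow> (\<exists>i<m. e = {0,2*i+2} \<or> e = {1,2*i+2} \<or> e = {2*i+2,2*i+3})"
  by (auto simp: EE_def)

lemma adj_GG: "adj (GG m) u v \<longleftrightarrow> (\<exists>i<m. (u=0 \<and> v=2*i+2) \<or> (v=0 \<and> u=2*i+2) \<or> (u=1 \<and> v=2*i+2)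
   \<or> (v=1 \<and> u=2*i+2) \<or> (u=2*i+2 \<and> v=2*i+3) \<or> (v=2*i+2 \<and> u=2*i+3))" (is "?L = ?R")
proof
  assume ?L
  then obtain i where "i<m" "{u,v} = {0,2*i+2} \<or> {u,v} = {1,2*i+2} \<or> {u,v} = {2*i+2,2*i+3}"
    unfolding adj_def edges_GG mem_EE by blast
  thus ?R unfolding doubleton_eq_iff by blast
next
  assume ?R
  then obtain i where "i<m" "(u=0 \<and> v=2*i+2) \<or> (v=0 \<and> u=2*i+2) \<or> (u=1 \<and> v=2*i+2)
   \<or> (v=1 \<and> u=2*i+2) \<or> (u=2*i+2 \<and> v=2*i+3) \<or> (v=2*i+2 \<and> u=2*i+3)" by blast
  thus ?L unfolding adj_def edges_GG mem_EE by (auto simp: insert_commute)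
qed

lemma vert_cases:
  fixes v m :: nat
  assumes "v < 2*m+2"
  obtains "v = 0" | "v = 1" | i where "i < m" "v = 2*i+2" | i where "i < m" "v = 2*i+3"
proof -
  consider "v = 0" | "v = 1" | "v \<ge> 2 \<and> even v" | "v \<ge> 2 \<and> odd v" by linarith
  thus ?thesis
  proof cases
    case 3
    then obtain k where k: "v = 2*k" by (auto elim!: evenE)
    have "k - 1 < m" "v = 2*(k-1)+2" using 3 assms k by linarith+
    thus ?thesis using that(3) by blast
  next
    case 4
    then obtain k where k: "v = 2*k+1" by (auto elim!: oddE)
    have "k - 1 < m" "v = 2*(k-1)+3" using 4 assms k by linarith+
    thus ?thesis using that(4) by blast
  next
    case 1 thus ?thesis using that(1) by blast
  next
    case 2 thus ?thesis using that(2) by blast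
  qed
qed

lemma ex2: "(a::nat) \<noteq> b \<Longrightarrow> a < n \<Longrightarrow> b < n \<Longrightarrow> \<exists>u v. {a,b} = {u,v} \<and> u \<noteq> v \<and> u < n \<and> v < n"
  by blast

lemma is_graph_GG: "is_graph (GG m)"
  unfolding is_graph_def by (auto simp: mem_EE intro!: ex2)

lemma adj_sym: "adj H u v \<Longrightarrow> adj H v u"
  unfolding adj_def by (auto simp: insert_commute)

lemma adj_leaf: "adj (GG m) x (2*i+3) \<longleftrightarrow> x = 2*i+2 \<and> i < m"
  unfolding adj_GG by (auto; presburger)

lemma adj_c: "adj (GG m) x (2*i+2) \<Longrightarrow> x = 0 \<or> x = 1 \<or> x = 2*i+3"
  unfolding adj_GG by (auto; presburger)

lemma E0: "i < m \<Longrightarrow> {0, 2*i+2} \<in> EE m" by (auto simp: EE_def)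
lemma E1: "i < m \<Longrightarrow> {1, 2*i+2} \<in> EE m" by (auto simp: EE_def)
lemma E2: "i < m \<Longrightarrow> {2*i+2, 2*i+3} \<in> EE m" by (auto simp: EE_def)

lemma adj_verts: "adj (GG m) u v \<Longrightarrow> u < 2*m+2 \<and> v < 2*m+2"
  unfolding adj_GG by auto

lemma finite_EE: "finite (EE m)"
  unfolding EE_def by simp

lemma leaf_edge: "e \<in> EE m \<Longrightarrow> 2*i+3 \<in> e \<Longrightarrow> e = {2*i+2,2*i+3}"
proof -
  assume a: "e \<in> EE m" "2*i+3 \<in> e"
  then obtain k where "k<m" "e = {0,2*k+2} \<or> e = {1,2*k+2} \<or> e = {2*k+2,2*k+3}"
    unfolding Diff_iff singleton_iff mem_EE by blast
  thus ?thesis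
  proof (elim disjE)
    assume "e = {0,2*k+2}" thus ?thesis using a(2) by simp presburger
  next
    assume "e = {1,2*k+2}" thus ?thesis using a(2) by simp presburger
  next
    assume e: "e = {2*k+2,2*k+3}"
    hence "2*i+3 = 2*k+2 \<or> 2*i+3 = 2*k+3" using a(2) by simp
    hence "k = i" by presburger
    thus ?thesis using e by simp
  qed
qed

lemma deg_leaf: "i < m \<Longrightarrow> degree (GG m) (2*i+3) = 1"
proof -
  assume "i < m"
  hence "{e \<in> EE m. 2*i+3 \<in> e} = {{2*i+2, 2*i+3}}"
    using leaf_edge E2 by blast
  thus ?thesis unfolding degree_def by simp
qed

lemma deg_ge2:
  assumes "e1 \<in> EE m" "e2 \<in> EE m" "v \<in> e1" "v \<in> e2" "e1 \<noteq> e2"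
  shows "degree (GG m) v \<noteq> 1"
proof -
  have "{e1, e2} \<subseteq> {e \<in> EE m. v \<in> e}" using assms by auto
  hence "card {e1, e2} \<le> degree (GG m) v"
    unfolding degree_def edges_GG by (rule card_mono[rotated]) (simp add: finite_EE)
  thus ?thesis using assms(5) by simp
qed

lemma leaves_GG:
  assumes "m \<ge> 2"
  shows "leaves (GG m) = (\<lambda>i. 2*i+3) ` {..<m}"
proof (intro set_eqI iffI)
  fix v assume v: "v \<in> leaves (GG m)"
  hence vl: "v < 2*m+2" "degree (GG m) v = 1" unfolding leaves_def by auto
  show "v \<in> (\<lambda>i. 2*i+3) ` {..<m}"
  using vl(1) proof (cases rule: vert_cases)
    case 1
    have "degree (GG m) v \<noteq> 1"
      by (rule deg_ge2[OF E0[of 0] E0[of 1]]) (use 1 assms in \<open>simp_all add: doubleton_eq_iff\<close>)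
    thus ?thesis using vl by simp
  next
    case 2
    have "degree (GG m) v \<noteq> 1"
      by (rule deg_ge2[OF E1[of 0] E1[of 1]]) (use 2 assms in \<open>simp_all add: doubleton_eq_iff\<close>)
    thus ?thesis using vl by simp
  next
    case (3 i)
    have "degree (GG m) v \<noteq> 1"
      by (rule deg_ge2[OF E0[of i] E1[of i]]) (use 3 assms in \<open>simp_all add: doubleton_eq_iff\<close>)
    thus ?thesis using vl by simp
  next
    case (4 i) thus ?thesis by (simp add: image_iff)
  qed
next
  fix v assume "v \<in> (\<lambda>i. 2*i+3) ` {..<m}"
  then obtain i where "i < m" "v = 2*i+3" by auto
  thus "v \<in> leaves (GG m)" unfolding leaves_def using deg_leaf by simp
qed

lemma dl_verts:
  assumes "m \<ge> 2"
  shows "v \<in> verts (delete_leaves (GG m)) \<longleftrightarrow> v \<le> 1 \<or> (\<exists>i<m. v = 2*i+2)"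
proof
  assume "v \<in> verts (delete_leaves (GG m))"
  hence v: "v < 2*m+2" "v \<notin> (\<lambda>i. 2*i+3) ` {..<m}"
    unfolding delete_leaves_def leaves_GG[OF assms] by auto
  from v(1) show "v \<le> 1 \<or> (\<exists>i<m. v = 2*i+2)"
  proof (cases rule: vert_cases)
    case (4 i) thus ?thesis using v(2) by (simp add: image_iff)
  qed auto
next
  assume a: "v \<le> 1 \<or> (\<exists>i<m. v = 2*i+2)"
  hence "v < 2*m+2" by auto
  moreover have "v \<notin> (\<lambda>i. 2*i+3) ` {..<m}"
  proof
    assume "v \<in> (\<lambda>i. 2*i+3) ` {..<m}"
    then obtain k where "v = 2*k+3" by auto
    thus False using a by presburger
  qed
  ultimately show "v \<in> verts (delete_leaves (GG m))"
    unfolding delete_leaves_def leaves_GG[OF assms] by simp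
qed

lemma dl_adj:
  "u \<in> verts (delete_leaves G) \<Longrightarrow> v \<in> verts (delete_leaves G) \<Longrightarrow> adj G u v \<Longrightarrow> adj (delete_leaves G) u v"
  unfolding delete_leaves_def by simp

lemma hub_conn:
  assumes H: "\<forall>v\<in>verts H. v \<le> 1 \<or> (\<exists>i<m. v = 2*i+2)"
    and a: "a \<in> verts H" "a \<le> 1" and j: "j < m" "2*j+2 \<in> verts H"
    and A: "\<And>u v. u \<in> verts H \<Longrightarrow> v \<in> verts H \<Longrightarrow> adj (GG m) u v \<Longrightarrow> adj H u v"
  shows "connected H"
proof (rule connected_root[OF a(1)])
  have step: "(x, 2*k+2) \<in> reach H" if "x \<le> 1" "x \<in> verts H" "k < m" "2*k+2 \<in> verts H" for x k
  proof -
    have "adj (GG m) x (2*k+2)" unfolding adj_GG using that by auto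
    thus ?thesis using that by (intro reach_edge A) auto
  qed
  fix v assume v: "v \<in> verts H"
  from H v have "v \<le> 1 \<or> (\<exists>i<m. v = 2*i+2)" by blast
  thus "(a, v) \<in> reach H"
  proof
    assume "v \<le> 1"
    hence "(v, 2*j+2) \<in> reach H" using step v j by blast
    moreover have "(a, 2*j+2) \<in> reach H" using step a j by blast
    ultimately show ?thesis using reach_sym reach_trans by metis
  next
    assume "\<exists>i<m. v = 2*i+2"
    then obtain i where "i < m" "v = 2*i+2" by blast
    thus ?thesis using step a v by blast
  qed
qed

lemma two_conn:
  assumes m: "m \<ge> 2"
  shows "two_connected (delete_leaves (GG m))"
proof -
  define K where "K = delete_leaves (GG m)"
  have KV: "v \<in> verts K \<longleftrightarrow> v \<le> 1 \<or> (\<exists>i<m. v = 2*i+2)" for v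
    unfolding K_def using dl_verts[OF m] .
  have KA: "u \<in> verts K \<Longrightarrow> v \<in> verts K \<Longrightarrow> adj (GG m) u v \<Longrightarrow> adj K u v" for u v
    unfolding K_def by (rule dl_adj)
  have fin: "finite (verts K)" unfolding K_def delete_leaves_def by simp
  have sub: "{0,1,2} \<subseteq> verts K" using m KV[of 0] KV[of 1] KV[of 2] by auto
  have "card {0::nat,1,2} \<le> card (verts K)" by (rule card_mono[OF fin sub])
  hence c3: "card (verts K) \<ge> 3" by simp
  have conK: "connected K"
    by (rule hub_conn[where a=0 and j=0]) (use KV KA m in auto)
  have "connected (induced K (verts K - {x}))" if x: "x \<in> verts K" for x
  proof -
    let ?H = "induced K (verts K - {x})"
    have HV: "v \<in> verts ?H \<longleftrightarrow> v \<in> verts K \<and> v \<noteq> x" for v by auto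
    have HA: "u \<in> verts ?H \<Longrightarrow> v \<in> verts ?H \<Longrightarrow> adj (GG m) u v \<Longrightarrow> adj ?H u v" for u v
      using KA by auto
    have HH: "\<forall>v\<in>verts ?H. v \<le> 1 \<or> (\<exists>i<m. v = 2*i+2)" using KV by auto
    from x KV have "x \<le> 1 \<or> (\<exists>i<m. x = 2*i+2)" by blast
    thus ?thesis
    proof (elim disjE)
      assume x1: "x \<le> 1"
      show ?thesis
      proof (cases "x = 0")
        case True
        show ?thesis by (rule hub_conn[OF HH, where a=1 and j=0]) (use HV KV HA m True x1 in auto)
      next
        case False
        show ?thesis by (rule hub_conn[OF HH, where a=0 and j=0]) (use HV KV HA m False x1 in auto)
      qed
    next
      assume "\<exists>i<m. x = 2*i+2"
      then obtain k where k: "k < m" "x = 2*k+2" by blast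
      define j where "j = (if k = 0 then 1 else 0::nat)"
      have j: "j < m" "j \<noteq> k" unfolding j_def using m by auto
      have jx: "2*j+2 \<in> verts ?H" using j k KV HV by auto
      show ?thesis by (rule hub_conn[OF HH, where a=0 and j=j]) (use HV KV HA m k j jx in auto)
    qed
  qed
  thus ?thesis using c3 conK unfolding two_connected_def K_def by blast
qed

definition Gd :: "nat \<Rightarrow> nat set \<Rightarrow> graph" where "Gd m d = ({..<2*m+2}, EE m - {d})"

lemma verts_Gd[simp]: "verts (Gd m d) = {..<2*m+2}" by (simp add: Gd_def verts_def)
lemma edges_Gd[simp]: "edges (Gd m d) = EE m - {d}" by (simp add: Gd_def edges_def)

lemma rd: "adj (GG m) u v \<Longrightarrow> {u,v} \<noteq> d \<Longrightarrow> (u, v) \<in> reach (Gd m d)"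
proof -
  assume a: "adj (GG m) u v" "{u,v} \<noteq> d"
  have "adj (Gd m d) u v" using a unfolding adj_def by simp
  thus ?thesis using adj_verts[OF a(1)] by (intro reach_edge) auto
qed

lemma adj0: "i < m \<Longrightarrow> adj (GG m) 0 (2*i+2)" unfolding adj_GG by blast
lemma adj1: "i < m \<Longrightarrow> adj (GG m) (2*i+2) 1" unfolding adj_GG by blast
lemma adjl: "i < m \<Longrightarrow> adj (GG m) (2*i+2) (2*i+3)" unfolding adj_GG by blast

lemma ess_reach01:
  assumes m: "m \<ge> 2"
  shows "(0, 1) \<in> reach (Gd m d)"
proof (cases "d = {0,2} \<or> d = {2,1}")
  case True
  have "(0, 2*1+2) \<in> reach (Gd m d)" by (rule rd[OF adj0]) (use m True in \<open>auto simp: doubleton_eq_iff\<close>)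
  moreover have "(2*1+2, 1) \<in> reach (Gd m d)" by (rule rd[OF adj1]) (use m True in \<open>auto simp: doubleton_eq_iff\<close>)
  ultimately show ?thesis by (rule reach_trans)
next
  case False
  have "(0, 2*0+2) \<in> reach (Gd m d)" by (rule rd[OF adj0]) (use m False in \<open>auto simp: doubleton_eq_iff\<close>)
  moreover have "(2*0+2, 1) \<in> reach (Gd m d)" by (rule rd[OF adj1]) (use m False in \<open>auto simp: doubleton_eq_iff insert_commute\<close>)
  ultimately show ?thesis by (rule reach_trans)
qed

lemma ess_reach_c:
  assumes m: "m \<ge> 2" and i: "i < m"
  shows "(0, 2*i+2) \<in> reach (Gd m d)"
proof (cases "d = {0, 2*i+2}")
  case True
  have "(2*i+2, 1) \<in> reach (Gd m d)" by (rule rd[OF adj1[OF i]]) (use True in \<open>auto simp: doubleton_eq_iff\<close>)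
  thus ?thesis using ess_reach01[OF m] reach_sym reach_trans by metis
next
  case False
  show ?thesis by (rule rd[OF adj0[OF i]]) (use False in auto)
qed

lemma ess_reach_l:
  assumes m: "m \<ge> 2" and i: "i < m" and d: "{2*i+2, 2*i+3} \<noteq> d"
  shows "(0, 2*i+3) \<in> reach (Gd m d)"
  using reach_trans[OF ess_reach_c[OF m i] rd[OF adjl[OF i] d]] .

lemma endpoint:
  assumes m: "m \<ge> 2" and e: "e \<in> EE m - {d}" and u: "u \<in> e"
  shows "(0, u) \<in> reach (Gd m d)"
proof -
  from e obtain i where i: "i < m" and ed: "e \<noteq> d"
    and "e = {0,2*i+2} \<or> e = {1,2*i+2} \<or> e = {2*i+2,2*i+3}"
    unfolding Diff_iff singleton_iff mem_EE by blast
  thus ?thesis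
  proof (elim disjE)
    assume "e = {0,2*i+2}"
    thus ?thesis using u ess_reach_c[OF m i] reach_refl[of 0 "Gd m d"] by auto
  next
    assume "e = {1,2*i+2}"
    thus ?thesis using u ess_reach_c[OF m i] ess_reach01[OF m] by auto
  next
    assume "e = {2*i+2,2*i+3}"
    thus ?thesis using u ess_reach_c[OF m i] ess_reach_l[OF m i] ed by auto
  qed
qed

lemma empty_notin_EE: "{} \<notin> EE m" unfolding mem_EE by auto

lemma GG_Gd: "GG m = Gd m {}"
  using empty_notin_EE by (simp add: GG_def Gd_def)

lemma connected_GG:
  assumes m: "m \<ge> 2"
  shows "connected (GG m)"
  unfolding GG_Gd
proof (rule connected_root[where r=0])
  show "0 \<in> verts (Gd m {})" by simp
  fix v assume "v \<in> verts (Gd m {})"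
  hence "v < 2*m+2" by simp
  thus "(0, v) \<in> reach (Gd m {})"
  proof (cases rule: vert_cases)
    case 1 thus ?thesis using reach_refl by simp
  next
    case 2 thus ?thesis using ess_reach01[OF m] by simp
  next
    case (3 i) thus ?thesis using ess_reach_c[OF m] by simp
  next
    case (4 i) thus ?thesis using ess_reach_l[OF m] by simp
  qed
qed

lemma ess_GG:
  assumes m: "m \<ge> 2"
  shows "ess_2_edge_connected (GG m)"
  unfolding ess_2_edge_connected_def
proof (intro allI impI)
  fix D assume D: "D \<subseteq> edges (GG m)" "card D < 2"
  have fD: "finite D" using D(1) finite_EE finite_subset by auto
  obtain d where dd: "EE m - D = EE m - {d}"
  proof (cases "card D = 0")
    case True
    hence "D = {}" using fD by simp
    thus ?thesis using that[of "{}"] empty_notin_EE by auto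
  next
    case False
    hence "card D = 1" using D(2) by simp
    then obtain d where "D = {d}" by (rule card_1_singletonE)
    thus ?thesis using that by blast
  qed
  have eq: "(verts (GG m), edges (GG m) - D) = Gd m d" using dd by (simp add: Gd_def)
  show "\<not> two_nontrivial_components (verts (GG m), edges (GG m) - D)"
    unfolding eq two_nontrivial_components_def
  proof clarify
    fix e1 e2 u v
    assume "e1 \<in> edges (Gd m d)" "e2 \<in> edges (Gd m d)" "u \<in> e1" "v \<in> e2" "(u, v) \<notin> reach (Gd m d)"
    moreover have "(0, u) \<in> reach (Gd m d)" "(0, v) \<in> reach (Gd m d)"
      using endpoint[OF m] calculation by auto
    ultimately show False using reach_sym reach_trans by metis
  qed
qed

lemma verts_square[simp]: "verts (square G) = verts G"
  by (simp add: square_def verts_def)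

lemma edges_square: "edges (square G) = {{u, v} | u v. u \<in> verts G \<and> v \<in> verts G \<and> u \<noteq> v \<and>
       (adj G u v \<or> (\<exists>w. adj G u w \<and> adj G w v))}"
  by (simp add: square_def edges_def verts_def)

lemma sq_leaf:
  assumes e: "e \<in> edges (square (GG m))" and l: "2*i+3 \<in> e"
  shows "e = {2*i+3,2*i+2} \<or> e = {2*i+3,0} \<or> e = {2*i+3,1}"
proof -
  obtain u v where uv: "e = {u,v}" "u \<noteq> v" "adj (GG m) u v \<or> (\<exists>w. adj (GG m) u w \<and> adj (GG m) w v)"
    using e unfolding edges_square by blast
  have N1: "x = 2*i+2" if "adj (GG m) (2*i+3) x" for x using adj_sym[OF that] adj_leaf by blast
  have N1': "x = 2*i+2" if "adj (GG m) x (2*i+3)" for x using that adj_leaf by blast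
  have N2: "x = 0 \<or> x = 1 \<or> x = 2*i+3" if "adj (GG m) (2*i+2) x" for x using adj_c[OF adj_sym[OF that]] .
  have N2': "x = 0 \<or> x = 1 \<or> x = 2*i+3" if "adj (GG m) x (2*i+2)" for x using adj_c[OF that] .
  from l uv(1) have "u = 2*i+3 \<or> v = 2*i+3" by auto
  thus ?thesis
  proof
    assume u: "u = 2*i+3"
    from uv(3) show ?thesis
    proof
      assume "adj (GG m) u v" thus ?thesis using N1 u uv(1) by auto
    next
      assume "\<exists>w. adj (GG m) u w \<and> adj (GG m) w v"
      then obtain w where "adj (GG m) u w" "adj (GG m) w v" by blast
      hence "w = 2*i+2" "adj (GG m) w v" using N1 u by auto
      hence "v = 0 \<or> v = 1 \<or> v = 2*i+3" using N2 by blast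
      thus ?thesis using u uv(1,2) by auto
    qed
  next
    assume v: "v = 2*i+3"
    from uv(3) show ?thesis
    proof
      assume "adj (GG m) u v" thus ?thesis using N1' v uv(1) by (auto simp: insert_commute)
    next
      assume "\<exists>w. adj (GG m) u w \<and> adj (GG m) w v"
      then obtain w where "adj (GG m) u w" "adj (GG m) w v" by blast
      hence "w = 2*i+2" "adj (GG m) u w" using N1' v by auto
      hence "u = 0 \<or> u = 1 \<or> u = 2*i+3" using N2' by blast
      thus ?thesis using v uv(1,2) by (auto simp: insert_commute)
    qed
  qed
qed

lemma finite_sq: "finite (edges (square (GG m)))"
proof (rule finite_subset)
  show "edges (square (GG m)) \<subseteq> Pow {..<2*m+2}" unfolding edges_square by auto
qed simp

lemma no_factor:
  assumes m: "4*s < m"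
  shows "\<not> (\<exists>F. two_2s_factor s F (square (GG m)))"
proof
  assume "\<exists>F. two_2s_factor s F (square (GG m))"
  then obtain F where F: "two_2s_factor s F (square (GG m))" by blast
  have vF: "verts F = {..<2*m+2}" and eF: "edges F \<subseteq> edges (square (GG m))"
    using F unfolding two_2s_factor_def connected_even_factor_def is_factor_def by auto
  have deg: "degree F v > 0" "even (degree F v)" "degree F v \<le> 2*s" if "v < 2*m+2" for v
    using F that vF unfolding two_2s_factor_def connected_even_factor_def by auto
  have finF: "finite (edges F)" using eF finite_sq finite_subset by blast
  have key: "{2*i+3,0} \<in> edges F \<or> {2*i+3,1} \<in> edges F" if i: "i < m" for i
  proof (rule ccontr)
    assume nn: "\<not> ?thesis"
    have "{e \<in> edges F. 2*i+3 \<in> e} \<subseteq> {{2*i+3,2*i+2}}"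
      using sq_leaf eF nn by blast
    hence "degree F (2*i+3) \<le> card {{2*i+3,2*i+2::nat}}"
      unfolding degree_def by (intro card_mono) auto
    hence "degree F (2*i+3) \<le> 1" by simp
    moreover have "degree F (2*i+3) > 0" "even (degree F (2*i+3))" using deg[of "2*i+3"] i by auto
    ultimately show False by (auto elim!: evenE)
  qed
  define f where "f i = (if {2*i+3,0} \<in> edges F then {2*i+3,0} else {2*i+3,1::nat})" for i
  have f_in: "f i \<in> edges F" if "i < m" for i using key[OF that] unfolding f_def by auto
  have f_sub: "f i \<subseteq> {2*i+3, 0, 1}" for i unfolding f_def by auto
  have "inj_on f {..<m}"
  proof (rule inj_onI)
    fix i k assume "f i = f k"
    moreover have "2*i+3 \<in> f i" unfolding f_def by auto
    ultimately have "2*i+3 \<in> {2*k+3, 0, 1::nat}" using f_sub[of k] by auto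
    thus "i = k" by auto
  qed
  hence cardf: "card (f ` {..<m}) = m" by (simp add: card_image)
  have f01: "0 \<in> f i \<or> 1 \<in> f i" for i unfolding f_def by auto
  have sub: "f ` {..<m} \<subseteq> {e \<in> edges F. 0 \<in> e} \<union> {e \<in> edges F. 1 \<in> e}"
    using f_in f01 by blast
  have finA: "finite ({e \<in> edges F. 0 \<in> e} \<union> {e \<in> edges F. 1 \<in> e})" using finF by simp
  have "m \<le> card ({e \<in> edges F. 0 \<in> e} \<union> {e \<in> edges F. 1 \<in> e})"
    using card_mono[OF finA sub] cardf by simp
  also have "\<dots> \<le> degree F 0 + degree F 1" unfolding degree_def by (rule card_Un_le)
  also have "\<dots> \<le> 4*s" using deg(3)[of 0] deg(3)[of 1] by simp
  finally show False using m by simp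
qed

theorem theorem4:
  fixes s :: nat
  assumes "s \<ge> 1"
  shows "\<exists>\<G> :: graph set. infinite \<G> \<and>
           (\<forall>G\<in>\<G>. \<forall>H\<in>\<G>. G \<noteq> H \<longrightarrow> \<not> graph_iso G H) \<and>
           (\<forall>G\<in>\<G>. is_graph G \<and> connected G \<and> ess_2_edge_connected G \<and>
              two_connected (delete_leaves G) \<and>
              \<not> (\<exists>F. two_2s_factor s F (square G)))"
proof (intro exI conjI)
  let ?M = "{m. 4*s < m}"
  have inj: "inj_on GG ?M"
  proof (rule inj_onI)
    fix m n assume "GG m = GG n"
    hence "card (verts (GG m)) = card (verts (GG n))" by simp
    thus "m = n" by simp
  qed
  have "infinite ?M"
  proof -
    have "{m. 4*s < m} = {4*s<..}" by auto
    thus ?thesis using infinite_Ioi[of "4*s"] by simp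
  qed
  thus "infinite (GG ` ?M)" using finite_imageD inj by blast
  show "\<forall>G\<in>GG ` ?M. \<forall>H\<in>GG ` ?M. G \<noteq> H \<longrightarrow> \<not> graph_iso G H"
  proof (intro ballI impI notI)
    fix G H assume "G \<in> GG ` ?M" "H \<in> GG ` ?M" and ne: "G \<noteq> H" and iso: "graph_iso G H"
    then obtain m n where mn: "G = GG m" "H = GG n" by blast
    from iso obtain f where "bij_betw f (verts G) (verts H)" unfolding graph_iso_def by blast
    hence "card (verts G) = card (verts H)" by (rule bij_betw_same_card)
    hence "m = n" using mn by simp
    thus False using ne mn by simp
  qed
  show "\<forall>G\<in>GG ` ?M. is_graph G \<and> connected G \<and> ess_2_edge_connected G \<and>
              two_connected (delete_leaves G) \<and> \<not> (\<exists>F. two_2s_factor s F (square G))"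
  proof
    fix G assume "G \<in> GG ` ?M"
    then obtain m where m: "4*s < m" and G: "G = GG m" by blast
    hence m2: "m \<ge> 2" using assms by simp
    show "is_graph G \<and> connected G \<and> ess_2_edge_connected G \<and>
              two_connected (delete_leaves G) \<and> \<not> (\<exists>F. two_2s_factor s F (square G))"
      unfolding G using is_graph_GG connected_GG[OF m2] ess_GG[OF m2] two_conn[OF m2] no_factor[OF m] by blast
  qed
qed

end
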